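(* For any number of buyers $I\ge1$, any $k\ge 1$, $a>0$ and $X>0$, the exponential price mechanism with parameters $(k,a,X)$ guarantees a revenue of $$\sum_{v\in V}p(v)\cdot\min_{0\le n\le I}\left(\frac{a\,v}{k}\sum_{j=n+1}^{I}\frac1j+nX\big((1+1/a)^k-1\big)-(I-n)X\right).$$ Consequently it (for suitable parameters) guarantees any revenue below $\Pi_I^*$, the supremum of this expression over $k\ge1$, $a>0$, $X$.
   Context: Setting: a single good is sold to buyers $\mathcal I=\{1,\ldots,I\}$ who have a common value $v\in V=\{0,\nu,2\nu,\ldots,1\}$ with known prior $p\in\Delta(V)$, and quasi-linear utility. A mechanism consists of finite message sets $M_i$ (with $M=\prod_i M_i$), allocation rules $q_i:M\to[0,1]$ with $\sum_i q_i(m)\le 1$, and payment rules $P_i:M\to\mathbb R$; each $M_i$ contains an opt-out message $0$ with $q_i(0,m_{-i})=P_i(0,m_{-i})=0$ for all $m_{-i}$. Buyer $i$'s utility is $U_i(v,m)=v\,q_i(m)-P_i(m)$. A Bayes correlated equilibrium (BCE) of the mechanism is a $\mu\in\Delta(V\times M)$ with $\sum_m\mu(v,m)=p(v)$ for all $v$ and $\sum_{(v,m_{-i})}\mu(v,m)\big(U_i(v,(m_i,m_{-i}))-U_i(v,(m_i',m_{-i}))\big)\ge 0$ for all $i$ and all $m_i,m_i'\in M_i$. A mechanism guarantees revenue $R$ if every BCE $\mu$ satisfies $\sum_{(v,m)}\sum_i\mu(v,m)P_i(m)\ge R$. Exponential price mechanism (parameters $k\ge1$, $a>0$, $X>0$):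 $M_i=\{0,1,\ldots,k\}$ for all $i$; it is symmetric, i.e. $q_i(m)=q(m_i,m_{-i})$ and $P_i(m)=P(m_i,m_{-i})$ where $q,P$ are invariant under permutations of the entries of $m_{-i}$. The allocation is defined by $q(0,m_{-1})=0$ and, for $0\le m_1\le k-1$, $q(m_1+1,m_{-1})-q(m_1,m_{-1})=\frac1k\cdot\frac{1}{|\mathrm{rank}(m_1,m_{-1})|}\sum_{j\in\mathrm{rank}(m_1,m_{-1})}\frac1j$, where $\mathrm{rank}(m_1,m_{-1})\subseteq\{1,\ldots,I\}$ is the set of positions (counting from the top, ties occupying consecutive positions) that the value $m_1$ occupies in the list $(m_1,\ldots,m_I)$ sorted in decreasing order (e.g. $\mathrm{rank}(20,10,20,40,30)=\{3,4\}$). The payment is $P(m_1,m_{-1})=X\big((1+1/a)^{m_1}-1\big)$. *)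

theory Defs
  imports Complex_Main "HOL-Library.FuncSet"
begin

text \<open>Buyers are indexed 0,...,I-1; buyer i's message set is
  Ms i (a finite set of naturals containing the opt-out message 0). A message profile
  is an element of the extensional function space over the buyers.
  q i m is buyer i's allocation probability, P i m his payment.\<close>

definition profiles :: "nat \<Rightarrow> (nat \<Rightarrow> nat set) \<Rightarrow> (nat \<Rightarrow> nat) set" where
  "profiles I Ms = PiE {0..<I} Ms"

definition util :: "(nat \<Rightarrow> (nat \<Rightarrow> nat) \<Rightarrow> real) \<Rightarrow> (nat \<Rightarrow> (nat \<Rightarrow> nat) \<Rightarrow> real)
    \<Rightarrow> nat \<Rightarrow> real \<Rightarrow> (nat \<Rightarrow> nat) \<Rightarrow> real" where
  "util q P i v m = v * q i m - P i m"

text \<open>Bayes correlated equilibrium: a probability distribution mu on V x M with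
  marginal p on V satisfying the obedience constraints.\<close>

definition is_BCE :: "nat \<Rightarrow> (nat \<Rightarrow> nat set) \<Rightarrow> (nat \<Rightarrow> (nat \<Rightarrow> nat) \<Rightarrow> real)
    \<Rightarrow> (nat \<Rightarrow> (nat \<Rightarrow> nat) \<Rightarrow> real) \<Rightarrow> real set \<Rightarrow> (real \<Rightarrow> real)
    \<Rightarrow> (real \<Rightarrow> (nat \<Rightarrow> nat) \<Rightarrow> real) \<Rightarrow> bool" where
  "is_BCE I Ms q P V p \<mu> \<longleftrightarrow>
     (\<forall>v\<in>V. \<forall>m\<in>profiles I Ms. 0 \<le> \<mu> v m) \<and>
     (\<forall>v\<in>V. (\<Sum>m\<in>profiles I Ms. \<mu> v m) = p v) \<and>
     (\<forall>i<I. \<forall>mi\<in>Ms i. \<forall>mi'\<in>Ms i.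
        0 \<le> (\<Sum>v\<in>V. \<Sum>m\<in>{m\<in>profiles I Ms. m i = mi}.
               \<mu> v m * (util q P i v m - util q P i v (m(i := mi')))))"

definition revenue :: "nat \<Rightarrow> (nat \<Rightarrow> nat set) \<Rightarrow> (nat \<Rightarrow> (nat \<Rightarrow> nat) \<Rightarrow> real)
    \<Rightarrow> real set \<Rightarrow> (real \<Rightarrow> (nat \<Rightarrow> nat) \<Rightarrow> real) \<Rightarrow> real" where
  "revenue I Ms P V \<mu> = (\<Sum>v\<in>V. \<Sum>m\<in>profiles I Ms. \<mu> v m * (\<Sum>i<I. P i m))"

definition guarantees :: "nat \<Rightarrow> (nat \<Rightarrow> nat set) \<Rightarrow> (nat \<Rightarrow> (nat \<Rightarrow> nat) \<Rightarrow> real)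
    \<Rightarrow> (nat \<Rightarrow> (nat \<Rightarrow> nat) \<Rightarrow> real) \<Rightarrow> real set \<Rightarrow> (real \<Rightarrow> real) \<Rightarrow> real \<Rightarrow> bool" where
  "guarantees I Ms q P V p R \<longleftrightarrow>
     (\<forall>\<mu>. is_BCE I Ms q P V p \<mu> \<longrightarrow> R \<le> revenue I Ms P V \<mu>)"

definition value_grid :: "nat \<Rightarrow> real set" where
  "value_grid N = (\<lambda>j. real j / real N) ` {0..N}"

text \<open>Exponential price mechanism. rank_set I m i t is the set of positions (1-based,
  from the top, ties occupying consecutive positions) that the value t occupies when
  buyer i's message is replaced by t in the profile m.\<close>

definition rank_set :: "nat \<Rightarrow> (nat \<Rightarrow> nat) \<Rightarrow> nat \<Rightarrow> nat \<Rightarrow> nat set" where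
  "rank_set I m i t =
     (let g = card {j\<in>{0..<I}. j \<noteq> i \<and> m j > t};
          e = card {j\<in>{0..<I}. j \<noteq> i \<and> m j = t}
      in {g + 1 .. g + e + 1})"

definition exp_msgs :: "nat \<Rightarrow> nat \<Rightarrow> nat set" where
  "exp_msgs k i = {0..k}"

definition exp_q :: "nat \<Rightarrow> nat \<Rightarrow> nat \<Rightarrow> (nat \<Rightarrow> nat) \<Rightarrow> real" where
  "exp_q I k i m = (\<Sum>t<m i. (1 / real k) * (1 / real (card (rank_set I m i t)))
                          * (\<Sum>j\<in>rank_set I m i t. 1 / real j))"

definition exp_P :: "real \<Rightarrow> real \<Rightarrow> nat \<Rightarrow> (nat \<Rightarrow> nat) \<Rightarrow> real" where
  "exp_P a X i m = X * ((1 + 1 / a) ^ (m i) - 1)"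

definition revenue_bound :: "nat \<Rightarrow> real set \<Rightarrow> (real \<Rightarrow> real) \<Rightarrow> nat \<Rightarrow> real \<Rightarrow> real \<Rightarrow> real" where
  "revenue_bound I V p k a X =
     (\<Sum>v\<in>V. p v * Min ((\<lambda>n. a * v / real k * (\<Sum>j\<in>{n+1..I}. 1 / real j)
                              + real n * X * ((1 + 1 / a) ^ k - 1)
                              - real (I - n) * X) ` {0..I}))"

end

theory Submission imports Defs begin

definition hh :: "nat \<Rightarrow> (nat\<Rightarrow>nat) \<Rightarrow> nat \<Rightarrow> real" where
 "hh I m i = (1 / real (card (rank_set I m i (m i)))) * (\<Sum>j\<in>rank_set I m i (m i). 1 / real j)"

lemma rank_upd: "rank_set I (m(i:=x)) i s = rank_set I m i s"
proof -
  have a: "{j\<in>{0..<I}. j \<noteq> i \<and> (m(i:=x)) j > s} = {j\<in>{0..<I}. j \<noteq> i \<and> m j > s}" by auto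
  have b: "{j\<in>{0..<I}. j \<noteq> i \<and> (m(i:=x)) j = s} = {j\<in>{0..<I}. j \<noteq> i \<and> m j = s}" by auto
  show ?thesis unfolding rank_set_def Let_def a b ..
qed

lemma sum_split_ivl:
  fixes f :: "nat \<Rightarrow> real"
  assumes "a \<le> b" "b \<le> c"
  shows "sum f {a<..b} + sum f {b<..c} = sum f {a<..c}"
proof -
  have "{a<..b} \<union> {b<..c} = {a<..c}" using assms by auto
  moreover have "{a<..b} \<inter> {b<..c} = {}" by auto
  ultimately show ?thesis by (metis finite_greaterThanAtMost sum.union_disjoint)
qed

lemma group_sum:
  fixes m :: "nat \<Rightarrow> nat"
  shows "(\<Sum>i\<in>{i\<in>{..<I}. m i = t}. hh I m i) =
         (\<Sum>j\<in>{card {i\<in>{..<I}. Suc t \<le> m i}<..card {i\<in>{..<I}. t \<le> m i}}. 1 / real j)"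
proof -
  define G where "G = {i\<in>{..<I}. m i = t}"
  define c1 where "c1 = card {i\<in>{..<I}. Suc t \<le> m i}"
  define c0 where "c0 = card {i\<in>{..<I}. t \<le> m i}"
  have "{i\<in>{..<I}. t \<le> m i} = {i\<in>{..<I}. Suc t \<le> m i} \<union> G" unfolding G_def by auto
  moreover have "{i\<in>{..<I}. Suc t \<le> m i} \<inter> G = {}" unfolding G_def by auto
  ultimately have c0: "c0 = c1 + card G" unfolding c0_def c1_def
    by (simp add: card_Un_disjoint G_def)
  show ?thesis
  proof (cases "G = {}")
    case True
    have "c0 = c1" using True c0 by simp
    then show ?thesis unfolding G_def[symmetric] c0_def[symmetric] c1_def[symmetric] using True by simp
  next
    case False
    have fG: "finite G" unfolding G_def by simp
    have cG: "card G \<ge> 1" using False fG by (simp add: Suc_le_eq card_gt_0_iff)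
    have rk: "rank_set I m i (m i) = {c1<..c0}" if "i \<in> G" for i
    proof -
      have mi: "m i = t" "i < I" using that unfolding G_def by auto
      have A: "{j\<in>{0..<I}. j \<noteq> i \<and> m j > m i} = {i\<in>{..<I}. Suc t \<le> m i}" using mi by auto
      have E: "{j\<in>{0..<I}. j \<noteq> i \<and> m j = m i} = G - {i}" using mi unfolding G_def by auto
      have "card (G - {i}) = card G - 1" using that fG by simp
      then show ?thesis unfolding rank_set_def Let_def A E c1_def[symmetric]
        using c0 cG by auto
    qed
    have cr: "card {c1<..c0} = card G" using c0 by simp
    have "(\<Sum>i\<in>G. hh I m i) = (\<Sum>i\<in>G. (1 / real (card G)) * (\<Sum>j\<in>{c1<..c0}. 1 / real j))"
      unfolding hh_def using rk cr by simp
    also have "\<dots> = (\<Sum>j\<in>{c1<..c0}. 1 / real j)" using cG by simp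
    finally show ?thesis unfolding G_def c0_def c1_def .
  qed
qed

lemma comb_sum:
  fixes m :: "nat \<Rightarrow> nat"
  shows "(\<Sum>i<I. if m i < t then hh I m i else 0) =
         (\<Sum>j\<in>{card {i\<in>{..<I}. t \<le> m i}<..I}. 1 / real j)"
proof (induction t)
  case 0
  then show ?case by simp
next
  case (Suc t)
  have "(\<Sum>i<I. if m i < Suc t then hh I m i else 0) =
        (\<Sum>i<I. if m i < t then hh I m i else 0) + (\<Sum>i<I. if m i = t then hh I m i else 0)"
    by (auto simp: sum.distrib[symmetric] intro!: sum.cong)
  also have "(\<Sum>i<I. if m i = t then hh I m i else 0) = (\<Sum>i\<in>{i\<in>{..<I}. m i = t}. hh I m i)"
    by (rule sum.inter_filter[symmetric]) simp
  also note group_sum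
  also note Suc
  also have "card {i\<in>{..<I}. t \<le> m i} \<le> I"
    by (metis (no_types, lifting) card_lessThan card_mono finite_lessThan mem_Collect_eq subsetI)
  then have "(\<Sum>j\<in>{card {i\<in>{..<I}. t \<le> m i}<..I}. 1 / real j) +
      (\<Sum>j\<in>{card {i\<in>{..<I}. Suc t \<le> m i}<..card {i\<in>{..<I}. t \<le> m i}}. 1 / real j)
     = (\<Sum>j\<in>{card {i\<in>{..<I}. Suc t \<le> m i}<..I}. 1 / real j)"
    by (subst add.commute, intro sum_split_ivl) (auto intro!: card_mono)
  finally show ?case .
qed

lemma sum_if_const: fixes I :: nat shows "(\<Sum>i<I. if Q i then (c::real) else 0) = real (card {i\<in>{..<I}. Q i}) * c"
proof -
  have "(\<Sum>i<I. if Q i then (c::real) else 0) = (\<Sum>i\<in>{i\<in>{..<I}. Q i}. c)"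
    using sum.inter_filter[OF finite_lessThan, where P=Q and g="\<lambda>_. c"] by simp
  then show ?thesis by simp
qed

lemma q_step:
  "exp_q I k i (m(i := m i + 1)) = exp_q I k i m + 1 / real k * hh I m i"
  unfolding exp_q_def hh_def by (simp add: rank_upd)

lemma P_step:
  assumes "a > 0"
  shows "exp_P a X i (m(i := m i + 1)) = exp_P a X i m + (exp_P a X i m + X) / a"
proof -
  have "X * ((1 + 1 / a) ^ (m i + 1) - 1) = X * ((1 + 1 / a) ^ m i - 1) + X * (1 + 1 / a) ^ m i / a"
    using assms by (simp add: field_simps)
  then show ?thesis unfolding exp_P_def by (simp add: algebra_simps)
qed

lemma main_bound:
  fixes I N k :: nat and a X :: real and p :: "real \<Rightarrow> real" and \<mu>
  assumes k: "k \<ge> 1" and a: "a > 0"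
    and bce: "is_BCE I (exp_msgs k) (exp_q I k) (exp_P a X) (value_grid N) p \<mu>"
  shows "revenue_bound I (value_grid N) p k a X \<le> revenue I (exp_msgs k) (exp_P a X) (value_grid N) \<mu>"
proof -
  define Mp where "Mp = profiles I (exp_msgs k)"
  define V where "V = value_grid N"
  define P where "P = exp_P a X"
  define q where "q = exp_q I k"
  define F where "F = (\<lambda>v n. a * v / real k * (\<Sum>j\<in>{n+1..I}. 1 / real j)
                              + real n * X * ((1 + 1 / a) ^ k - 1)
                              - real (I - n) * X)"
  define D where "D = (\<lambda>i v m. if m i < k then \<mu> v m * (a * v / real k * hh I m i - P i m - X) else 0)"
  have fV: "finite V" unfolding V_def value_grid_def by simp
  have fM: "finite Mp" unfolding Mp_def profiles_def exp_msgs_def by (simp add: finite_PiE)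
  have Mrange: "m i \<le> k" if "m \<in> Mp" "i < I" for m i
    using that unfolding Mp_def profiles_def exp_msgs_def by (auto simp: PiE_iff)
  have mu0: "0 \<le> \<mu> v m" if "v \<in> V" "m \<in> Mp" for v m
    using bce that unfolding is_BCE_def V_def Mp_def by auto
  have marg: "(\<Sum>m\<in>Mp. \<mu> v m) = p v" if "v \<in> V" for v
    using bce that unfolding is_BCE_def V_def Mp_def by auto
  have st2: "(\<Sum>v\<in>V. \<Sum>m\<in>Mp. if m i = t then \<mu> v m * (a * v / real k * hh I m i - P i m - X) else 0) \<le> 0"
    if i: "i < I" and t: "t < k" for i t
  proof -
    have "0 \<le> (\<Sum>v\<in>V. \<Sum>m\<in>{m\<in>Mp. m i = t}.
               \<mu> v m * (util q P i v m - util q P i v (m(i := t + 1))))"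
      using bce i t unfolding is_BCE_def V_def Mp_def q_def P_def exp_msgs_def by auto
    also have "\<dots> = (\<Sum>v\<in>V. \<Sum>m\<in>{m\<in>Mp. m i = t}.
               - (1 / a) * (\<mu> v m * (a * v / real k * hh I m i - P i m - X)))"
    proof (intro sum.cong refl)
      fix v m assume "m \<in> {m\<in>Mp. m i = t}"
      then have mt: "m i = t" by simp
      have upd: "m(i := t + 1) = m(i := m i + 1)" using mt by simp
      have u1: "util q P i v (m(i := t + 1)) = v * (q i m + 1 / real k * hh I m i) - (P i m + (P i m + X) / a)"
        unfolding util_def q_def P_def upd q_step P_step[OF a] by simp
      show "\<mu> v m * (util q P i v m - util q P i v (m(i := t + 1))) =
          - (1 / a) * (\<mu> v m * (a * v / real k * hh I m i - P i m - X))"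
        unfolding u1 using a by (simp add: util_def field_simps)
    qed
    also have "\<dots> = (\<Sum>v\<in>V. \<Sum>m\<in>Mp. if m i = t then - (1 / a) * (\<mu> v m * (a * v / real k * hh I m i - P i m - X)) else 0)"
      by (simp only: sum.inter_filter[OF fM])
    also have "\<dots> = - (1 / a) * (\<Sum>v\<in>V. \<Sum>m\<in>Mp. if m i = t then \<mu> v m * (a * v / real k * hh I m i - P i m - X) else 0)"
      unfolding sum_distrib_left by (intro sum.cong refl) simp
    finally show ?thesis using a
      by (smt (verit, del_insts) divide_pos_pos mult_minus_left zero_less_mult_iff)
  qed
  have st3: "(\<Sum>v\<in>V. \<Sum>m\<in>Mp. D i v m) \<le> 0" if i: "i < I" for i
  proof -
    have "D i v m = (\<Sum>t<k. if m i = t then \<mu> v m * (a * v / real k * hh I m i - P i m - X) else 0)" for v m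
      unfolding D_def by (simp add: sum.delta)
    then have "(\<Sum>v\<in>V. \<Sum>m\<in>Mp. D i v m) =
       (\<Sum>v\<in>V. \<Sum>m\<in>Mp. \<Sum>t<k. if m i = t then \<mu> v m * (a * v / real k * hh I m i - P i m - X) else 0)"
      by simp
    also have "\<dots> = (\<Sum>v\<in>V. \<Sum>t<k. \<Sum>m\<in>Mp. if m i = t then \<mu> v m * (a * v / real k * hh I m i - P i m - X) else 0)"
      by (rule sum.cong[OF refl], rule sum.swap)
    also have "\<dots> = (\<Sum>t<k. \<Sum>v\<in>V. \<Sum>m\<in>Mp. if m i = t then \<mu> v m * (a * v / real k * hh I m i - P i m - X) else 0)"
      by (rule sum.swap)
    also have "\<dots> \<le> 0" by (rule sum_nonpos) (use st2 i in auto)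
    finally show ?thesis .
  qed
  have st3': "(\<Sum>v\<in>V. \<Sum>m\<in>Mp. \<Sum>i<I. D i v m) \<le> 0"
  proof -
    have "(\<Sum>v\<in>V. \<Sum>m\<in>Mp. \<Sum>i<I. D i v m) = (\<Sum>i<I. \<Sum>v\<in>V. \<Sum>m\<in>Mp. D i v m)"
      by (simp only: sum.swap[of _ Mp "{..<I}"] sum.swap[of _ V "{..<I}"])
    also have "\<dots> \<le> 0" by (rule sum_nonpos) (use st3 in auto)
    finally show ?thesis .
  qed
  have st4: "\<mu> v m * (\<Sum>i<I. P i m) + (\<Sum>i<I. D i v m) = \<mu> v m * F v (card {i\<in>{..<I}. m i = k})"
    if m: "m \<in> Mp" for v m
  proof -
    define n where "n = card {i\<in>{..<I}. m i = k}"
    have e1: "P i m + (if m i < k then a * v / real k * hh I m i - P i m - X else 0) =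
         (if m i = k then X * ((1 + 1 / a) ^ k - 1) else 0)
         + (if m i < k then a * v / real k * hh I m i else 0) - (if m i < k then X else 0)"
      if "i < I" for i
      using Mrange[OF m that] unfolding P_def exp_P_def by auto
    have "(\<Sum>i<I. P i m) + (\<Sum>i<I. (if m i < k then a * v / real k * hh I m i - P i m - X else 0))
       = (\<Sum>i<I. (if m i = k then X * ((1 + 1 / a) ^ k - 1) else 0))
         + a * v / real k * (\<Sum>i<I. if m i < k then hh I m i else 0) - (\<Sum>i<I. (if m i < k then X else 0))"
    proof -
      have "(\<Sum>i<I. P i m) + (\<Sum>i<I. (if m i < k then a * v / real k * hh I m i - P i m - X else 0))
          = (\<Sum>i<I. P i m + (if m i < k then a * v / real k * hh I m i - P i m - X else 0))"
        by (simp only: sum.distrib)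
      also have "\<dots> = (\<Sum>i<I. (if m i = k then X * ((1 + 1 / a) ^ k - 1) else 0)
         + (if m i < k then a * v / real k * hh I m i else 0) - (if m i < k then X else 0))"
        by (rule sum.cong[OF refl]) (simp add: e1)
      also have "\<dots> = (\<Sum>i<I. (if m i = k then X * ((1 + 1 / a) ^ k - 1) else 0))
         + (\<Sum>i<I. (if m i < k then a * v / real k * hh I m i else 0)) - (\<Sum>i<I. (if m i < k then X else 0))"
        by (simp only: sum.distrib sum_subtractf)
      also have "(\<Sum>i<I. (if m i < k then a * v / real k * hh I m i else 0)) =
          a * v / real k * (\<Sum>i<I. if m i < k then hh I m i else 0)"
        unfolding sum_distrib_left by (rule sum.cong[OF refl]) simp
      finally show ?thesis .
    qed
    also have "(\<Sum>i<I. (if m i = k then X * ((1 + 1 / a) ^ k - 1) else 0)) = real n * (X * ((1 + 1 / a) ^ k - 1))"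
      unfolding n_def by (rule sum_if_const)
    also have "(\<Sum>i<I. (if m i < k then X else 0)) = real (card {i\<in>{..<I}. m i < k}) * X"
      by (rule sum_if_const)
    also have "card {i\<in>{..<I}. m i < k} = I - n"
    proof -
      have "{i\<in>{..<I}. m i < k} = {..<I} - {i\<in>{..<I}. m i = k}" using Mrange[OF m] by (auto simp: order.order_iff_strict)
      moreover have "card ({..<I} - {i\<in>{..<I}. m i = k}) = card {..<I} - card {i\<in>{..<I}. m i = k}"
        by (rule card_Diff_subset) auto
      ultimately show ?thesis unfolding n_def by simp
    qed
    also have "(\<Sum>i<I. if m i < k then hh I m i else 0) = (\<Sum>j\<in>{n+1..I}. 1 / real j)"
    proof -
      have "{i\<in>{..<I}. k \<le> m i} = {i\<in>{..<I}. m i = k}" using Mrange[OF m] by force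
      then show ?thesis unfolding comb_sum n_def by (simp add: atLeastSucAtMost_greaterThanAtMost)
    qed
    finally have "(\<Sum>i<I. P i m) + (\<Sum>i<I. (if m i < k then a * v / real k * hh I m i - P i m - X else 0))
        = F v n" unfolding F_def by (simp add: algebra_simps)
    then have "\<mu> v m * ((\<Sum>i<I. P i m) + (\<Sum>i<I. (if m i < k then a * v / real k * hh I m i - P i m - X else 0)))
        = \<mu> v m * F v n" by simp
    then show ?thesis unfolding D_def n_def[symmetric]
      by (simp add: distrib_left sum_distrib_left if_distrib cong: if_cong)
  qed
  have nle: "card {i\<in>{..<I}. m i = k} \<le> I" for m :: "nat \<Rightarrow> nat"
    by (metis (no_types, lifting) card_lessThan card_mono finite_lessThan mem_Collect_eq subsetI)
  have "revenue_bound I V p k a X = (\<Sum>v\<in>V. \<Sum>m\<in>Mp. \<mu> v m * Min (F v ` {0..I}))"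
    unfolding revenue_bound_def F_def using marg by (simp add: sum_distrib_right[symmetric] mult.commute)
  also have "\<dots> \<le> (\<Sum>v\<in>V. \<Sum>m\<in>Mp. \<mu> v m * F v (card {i\<in>{..<I}. m i = k}))"
  proof (intro sum_mono mult_left_mono)
    fix v m assume "v \<in> V" "m \<in> Mp"
    then show "0 \<le> \<mu> v m" by (rule mu0)
    show "Min (F v ` {0..I}) \<le> F v (card {i\<in>{..<I}. m i = k})"
      by (rule Min_le) (use nle in auto)
  qed
  also have "\<dots> = (\<Sum>v\<in>V. \<Sum>m\<in>Mp. \<mu> v m * (\<Sum>i<I. P i m)) + (\<Sum>v\<in>V. \<Sum>m\<in>Mp. \<Sum>i<I. D i v m)"
    by (simp add: st4 sum.distrib[symmetric])
  also have "\<dots> \<le> (\<Sum>v\<in>V. \<Sum>m\<in>Mp. \<mu> v m * (\<Sum>i<I. P i m))" using st3' by simp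
  finally show ?thesis unfolding revenue_def V_def Mp_def P_def .
qed

theorem proposition1:
  fixes I N :: nat and p :: "real \<Rightarrow> real"
  assumes "I \<ge> 1" and "N \<ge> 1"
    and "\<forall>v\<in>value_grid N. 0 \<le> p v"
    and "(\<Sum>v\<in>value_grid N. p v) = 1"
  shows "(\<forall>(k::nat) (a::real) (X::real). k \<ge> 1 \<longrightarrow> a > 0 \<longrightarrow> X > 0 \<longrightarrow>
            guarantees I (exp_msgs k) (exp_q I k) (exp_P a X) (value_grid N) p
              (revenue_bound I (value_grid N) p k a X))
       \<and> (\<forall>R::real. (\<exists>(k::nat) (a::real) (X::real). k \<ge> 1 \<and> a > 0 \<and> X > 0 \<and>
                        R < revenue_bound I (value_grid N) p k a X) \<longrightarrow>
            (\<exists>(k::nat) (a::real) (X::real). k \<ge> 1 \<and> a > 0 \<and> X > 0 \<and>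
               guarantees I (exp_msgs k) (exp_q I k) (exp_P a X) (value_grid N) p R))"
proof (intro conjI allI impI)
  fix k :: nat and a X :: real
  assume "k \<ge> 1" "a > 0" "X > 0"
  then show "guarantees I (exp_msgs k) (exp_q I k) (exp_P a X) (value_grid N) p
              (revenue_bound I (value_grid N) p k a X)"
    unfolding guarantees_def using main_bound[of k a] by (intro allI impI) simp
next
  fix R :: real
  assume "\<exists>(k::nat) (a::real) (X::real). k \<ge> 1 \<and> a > 0 \<and> X > 0 \<and>
                        R < revenue_bound I (value_grid N) p k a X"
  then obtain k a X where h: "k \<ge> 1" "a > 0" "X > 0" "R < revenue_bound I (value_grid N) p k a X"
    by blast
  have "guarantees I (exp_msgs k) (exp_q I k) (exp_P a X) (value_grid N) p R"
    unfolding guarantees_def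
  proof (intro allI impI)
    fix \<mu> assume "is_BCE I (exp_msgs k) (exp_q I k) (exp_P a X) (value_grid N) p \<mu>"
    from main_bound[OF h(1,2) this] h(4)
    show "R \<le> revenue I (exp_msgs k) (exp_P a X) (value_grid N) \<mu>" by linarith
  qed
  then show "\<exists>(k::nat) (a::real) (X::real). k \<ge> 1 \<and> a > 0 \<and> X > 0 \<and>
               guarantees I (exp_msgs k) (exp_q I k) (exp_P a X) (value_grid N) p R"
    using h(1,2,3) by (intro exI[of _ k] exI[of _ a] exI[of _ X]) simp
qed

end
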